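(* Let $\Omega\subset\mathbb{R}^2$ be open, $\lambda>0$, and let $u\in L^2(\Omega)$ satisfy $-\Delta u=\lambda u$ in $\Omega$. Let $\mathbf{x}_0\in\Omega$, $h>0$, $\alpha\in(0,1)$, and let $\mathbf{e}^-,\mathbf{e}^+$ be unit vectors such that the angle from $\mathbf{e}^-$ to $\mathbf{e}^+$ is $\alpha\pi$; put $\Gamma^\pm=\{\mathbf{x}_0+t\mathbf{e}^\pm:0\le t\le h\}\subset\Omega$. Suppose $\Gamma^-$ and $\Gamma^+$ are generalized singular lines of $u$ with constant parameters $\eta_1\equiv C_1$ on $\Gamma^-$ and $\eta_2\equiv C_2$ on $\Gamma^+$. Let $n\in\mathbb{N}$, $n\ge3$. If $u(\mathbf{x}_0)=0$ and $\alpha\neq q/p$ for all integers $1\le q<p\le n-1$, then $u$ vanishes up to the order $n$ at $\mathbf{x}_0$, i.e. all partial derivatives of $u$ of order at most $n-1$ vanish at $\mathbf{x}_0$.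
   Context: No boundary condition is imposed on $\partial\Omega$; $u$ is real-analytic in $\Omega$. A line segment $\Gamma\subset\Omega$ is a generalized singular line of $u$ with parameter $\eta$ (a complex-valued function on $\Gamma$ not identically zero; here a nonzero complex constant) if $\partial_\nu u+\eta u=0$ on $\Gamma$, $\nu$ a unit normal vector to $\Gamma$. "Vanishes up to order $n$ at $\mathbf{x}_0$" means every homogeneous term of degree $<n$ in the Taylor expansion of $u$ at $\mathbf{x}_0$ is zero. *)

theory Defs
  imports "HOL-Analysis.Analysis"
begin

text \<open>The plane R^2 is identified with the complex numbers: the point (x,y) is x + i y.
  Functions u on (subsets of) the plane are complex-valued.\<close>

definition dir_deriv :: "(complex \<Rightarrow> complex) \<Rightarrow> complex \<Rightarrow> complex \<Rightarrow> complex" where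
  "dir_deriv f v z = vector_derivative (\<lambda>t::real. f (z + of_real t * v)) (at 0)"

definition pdx :: "(complex \<Rightarrow> complex) \<Rightarrow> complex \<Rightarrow> complex" where
  "pdx f = dir_deriv f 1"

definition pdy :: "(complex \<Rightarrow> complex) \<Rightarrow> complex \<Rightarrow> complex" where
  "pdy f = dir_deriv f \<i>"

definition pd :: "nat \<Rightarrow> nat \<Rightarrow> (complex \<Rightarrow> complex) \<Rightarrow> complex \<Rightarrow> complex" where
  "pd i j f = (pdx ^^ i) ((pdy ^^ j) f)"

definition smooth_on :: "(complex \<Rightarrow> complex) \<Rightarrow> complex set \<Rightarrow> bool" where
  "smooth_on f S \<longleftrightarrow> (\<forall>i j. \<forall>z\<in>S. pd i j f differentiable (at z))"

definition laplacian :: "(complex \<Rightarrow> complex) \<Rightarrow> complex \<Rightarrow> complex" where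
  "laplacian f z = pdx (pdx f) z + pdy (pdy f) z"

text \<open>Segment {x0 + t e : 0 <= t <= h} is a generalized singular line of u with constant
  parameter C, unit normal nu = i e.\<close>
definition gen_singular_line_const ::
  "(complex \<Rightarrow> complex) \<Rightarrow> complex \<Rightarrow> complex \<Rightarrow> real \<Rightarrow> complex \<Rightarrow> bool" where
  "gen_singular_line_const u x0 e h C \<longleftrightarrow>
     C \<noteq> 0 \<and> (\<forall>t\<in>{0..h}. dir_deriv u (\<i> * e) (x0 + of_real t * e) + C * u (x0 + of_real t * e) = 0)"

definition vanishes_up_to_order :: "(complex \<Rightarrow> complex) \<Rightarrow> nat \<Rightarrow> complex \<Rightarrow> bool" where
  "vanishes_up_to_order u n x0 \<longleftrightarrow> (\<forall>i j. i + j < n \<longrightarrow> pd i j u x0 = 0)"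

end

theory Submission
  imports Defs
begin


lemma dd_hvd:
  assumes "(f has_derivative F) (at (p + of_real t * v))"
  shows "((\<lambda>s. f (p + of_real s * v)) has_vector_derivative F v) (at t)"
proof -
  have bl: "bounded_linear (\<lambda>s::real. of_real s * v)"
    using bounded_linear_scaleR_left[of v] by (simp add: scaleR_conv_of_real)
  have g: "((\<lambda>s::real. p + of_real s * v) has_derivative (\<lambda>d. of_real d * v)) (at t)"
    using has_derivative_add[OF has_derivative_const[of p] bounded_linear_imp_has_derivative[OF bl]] by simp
  have "((f \<circ> (\<lambda>s::real. p + of_real s * v)) has_derivative (F \<circ> (\<lambda>d. of_real d * v))) (at t)"
    by (rule diff_chain_at[OF g assms])
  moreover have "(F \<circ> (\<lambda>d. of_real d * v)) = (\<lambda>d. d *\<^sub>R F v)"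
  proof
    fix d :: real
    have "linear F" using assms has_derivative_linear by blast
    then show "(F \<circ> (\<lambda>d. of_real d * v)) d = d *\<^sub>R F v"
      by (simp add: scaleR_conv_of_real[symmetric] linear_scale)
  qed
  ultimately show ?thesis by (simp add: has_vector_derivative_def o_def)
qed

lemma dd_frechet:
  assumes "f differentiable (at w)"
  shows "dir_deriv f v w = frechet_derivative f (at w) v"
proof -
  have "(f has_derivative frechet_derivative f (at w)) (at (w + of_real 0 * v))"
    using frechet_derivative_works[THEN iffD1, OF assms] by simp
  from dd_hvd[OF this] show ?thesis
    unfolding dir_deriv_def by (simp add: vector_derivative_at)
qed

lemma dd_lin:
  assumes "f differentiable (at w)"
  shows "dir_deriv f v w = of_real (Re v) * pdx f w + of_real (Im v) * pdy f w"
proof -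
  let ?F = "frechet_derivative f (at w)"
  have lin: "linear ?F" using assms frechet_derivative_works has_derivative_linear by blast
  have v: "v = Re v *\<^sub>R 1 + Im v *\<^sub>R \<i>" by (simp add: complex_eq_iff)
  have "?F v = Re v *\<^sub>R ?F 1 + Im v *\<^sub>R ?F \<i>"
    by (subst v) (simp add: linear_add[OF lin] linear_scale[OF lin])
  then show ?thesis using assms
    by (simp add: dd_frechet pdx_def pdy_def scaleR_conv_of_real)
qed

lemma dd_local:
  assumes "open S" "z \<in> S" "\<And>w. w \<in> S \<Longrightarrow> f w = g w"
  shows "dir_deriv f v z = dir_deriv g v z"
proof -
  let ?T = "{t::real. z + of_real t * v \<in> S}"
  have "open ((\<lambda>t::real. z + of_real t * v) -` S)"
    by (rule continuous_open_vimage[OF assms(1)]) (auto intro!: continuous_intros)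
  then have T: "open ?T" by (simp add: vimage_def)
  have 0: "0 \<in> ?T" using assms by simp
  have "\<And>D. ((\<lambda>t. f (z + of_real t * v)) has_vector_derivative D) (at 0) \<longleftrightarrow>
             ((\<lambda>t. g (z + of_real t * v)) has_vector_derivative D) (at 0)"
    using has_vector_derivative_transform_within_open[OF _ T 0] assms(3) by (metis (mono_tags, lifting) mem_Collect_eq)
  then show ?thesis unfolding dir_deriv_def vector_derivative_def by simp
qed

lemma dd_hvd2:
  assumes "f differentiable (at (p + of_real t * v))"
  shows "((\<lambda>s. f (p + of_real s * v)) has_vector_derivative dir_deriv f v (p + of_real t * v)) (at t)"
  using dd_hvd[OF frechet_derivative_works[THEN iffD1, OF assms]] dd_frechet[OF assms] by simp

lemma sq_est:
  fixes f :: "complex \<Rightarrow> complex"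
  assumes S: "open S" "z \<in> S" and fd: "\<And>p. p \<in> S \<Longrightarrow> f differentiable (at p)"
    and gd: "dir_deriv f v differentiable (at z)" and nv: "norm v = 1" and nw: "norm w = 1"
    and e: "\<epsilon> > 0"
  shows "\<exists>\<delta>>0. \<forall>h. 0 < h \<and> h < \<delta> \<longrightarrow>
     norm (f (z + of_real h * v + of_real h * w) - f (z + of_real h * v) - f (z + of_real h * w) + f z
           - of_real (h^2) * dir_deriv (dir_deriv f v) w z) \<le> \<epsilon> * h^2"
proof -
  let ?g = "dir_deriv f v"
  obtain F where F: "(?g has_derivative F) (at z)" using gd differentiable_def by blast
  have lin: "linear F" using F has_derivative_linear by blast
  have Fs: "\<And>r x. F (of_real r * x) = of_real r * F x"
    using linear_scale[OF lin] by (metis scaleR_conv_of_real)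
  have Fa: "\<And>x y. F (x + y) = F x + F y" using linear_add[OF lin] by simp
  have P: "dir_deriv ?g w z = F w"
  proof -
    have "(?g has_derivative F) (at (z + of_real 0 * w))" using F by simp
    from dd_hvd[OF this] show ?thesis unfolding dir_deriv_def by (simp add: vector_derivative_at)
  qed
  obtain d where d: "d > 0" and dH: "\<And>y. norm (y - z) < d \<Longrightarrow> norm (?g y - ?g z - F (y - z)) \<le> \<epsilon>/3 * norm (y - z)"
    using F[unfolded has_derivative_at_alt] e by (meson zero_less_divide_iff zero_less_numeral)
  obtain r where r: "r > 0" "ball z r \<subseteq> S" using S open_contains_ball by blast
  define \<delta> where "\<delta> = min d r / 2"
  have "\<delta> > 0" using d r by (simp add: \<delta>_def)
  moreover have "norm (f (z + of_real h * v + of_real h * w) - f (z + of_real h * v) - f (z + of_real h * w) + f z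
           - of_real (h^2) * dir_deriv (dir_deriv f v) w z) \<le> \<epsilon> * h^2" if h: "0 < h" "h < \<delta>" for h
  proof -
    define \<phi> where "\<phi> s = f (z + of_real h * w + of_real s * v) - f (z + of_real s * v) - of_real s * (of_real h * F w)" for s :: real
    define \<phi>' where "\<phi>' s = ?g (z + of_real h * w + of_real s * v) - ?g (z + of_real s * v) - of_real h * F w" for s :: real
    have near: "norm (z + of_real h * w + of_real s * v - z) < min d r" "norm (z + of_real s * v - z) < min d r"
      if "0 \<le> s" "s \<le> h" for s
    proof -
      have "norm (of_real h * w + of_real s * v) \<le> h + s"
        using norm_triangle_ineq[of "of_real h * w" "of_real s * v"] nv nw that h
        by (simp add: norm_mult)
      then show "norm (z + of_real h * w + of_real s * v - z) < min d r"
        using that h \<delta>_def by (simp add: add.assoc)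
      show "norm (z + of_real s * v - z) < min d r" using that h \<delta>_def nv by (simp add: norm_mult)
    qed
    have der: "(\<phi> has_vector_derivative \<phi>' s) (at s)" if "0 \<le> s" "s \<le> h" for s
    proof -
      have in1: "z + of_real h * w + of_real s * v \<in> S"
      proof (rule subsetD[OF r(2)])
        have "dist z (z + of_real h * w + of_real s * v) = norm (z + of_real h * w + of_real s * v - z)"
          by (simp add: dist_norm norm_minus_commute add_ac)
        then show "z + of_real h * w + of_real s * v \<in> ball z r" using near(1)[OF that] by simp
      qed
      have in2: "z + of_real s * v \<in> S"
      proof (rule subsetD[OF r(2)])
        have "dist z (z + of_real s * v) = norm (z + of_real s * v - z)"
          by (simp add: dist_norm norm_minus_commute)
        then show "z + of_real s * v \<in> ball z r" using near(2)[OF that] by simp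
      qed
      have d1: "((\<lambda>s. f (z + of_real h * w + of_real s * v)) has_vector_derivative ?g (z + of_real h * w + of_real s * v)) (at s)"
        using dd_hvd2[of f "z + of_real h * w" s v] fd[OF in1] by simp
      have d2: "((\<lambda>s. f (z + of_real s * v)) has_vector_derivative ?g (z + of_real s * v)) (at s)"
        using dd_hvd2[of f z s v] fd[OF in2] by simp
      have d3: "((\<lambda>s. of_real s * (of_real h * F w)) has_vector_derivative (of_real h * F w)) (at s)"
      proof -
        have "((\<lambda>s. s *\<^sub>R (of_real h * F w)) has_vector_derivative (of_real h * F w)) (at s)"
          unfolding has_vector_derivative_def by (rule bounded_linear_imp_has_derivative[OF bounded_linear_scaleR_left])
        then show ?thesis by (simp add: scaleR_conv_of_real)
      qed
      show ?thesis unfolding \<phi>_def[abs_def] \<phi>'_def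
        by (intro has_vector_derivative_diff d1 d2 d3)
    qed
    have bnd: "norm (\<phi>' s) \<le> \<epsilon> * h" if "0 \<le> s" "s \<le> h" for s
    proof -
      let ?y1 = "z + of_real h * w + of_real s * v" and ?y2 = "z + of_real s * v"
      have e1: "?y1 - z = of_real h * w + of_real s * v" by simp
      have e2: "?y2 - z = of_real s * v" by simp
      have FF: "F (?y1 - z) - F (?y2 - z) = of_real h * F w" unfolding e1 e2 Fa Fs by simp
      have aux: "\<And>A B C X Y Z::complex. X - Y = C \<Longrightarrow> A - B - C = (A - Z - X) - (B - Z - Y)"
        by (auto simp: algebra_simps)
      have eq: "\<phi>' s = (?g ?y1 - ?g z - F (?y1 - z)) - (?g ?y2 - ?g z - F (?y2 - z))"
        unfolding \<phi>'_def by (rule aux[OF FF])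
      have "norm (\<phi>' s) \<le> norm (?g ?y1 - ?g z - F (?y1 - z)) + norm (?g ?y2 - ?g z - F (?y2 - z))"
        unfolding eq by (rule norm_triangle_ineq4)
      also have "\<dots> \<le> \<epsilon>/3 * norm (?y1 - z) + \<epsilon>/3 * norm (?y2 - z)"
        by (intro add_mono dH) (use near[OF that] in auto)
      also have "\<dots> \<le> \<epsilon>/3 * (2*h) + \<epsilon>/3 * h"
      proof (intro add_mono mult_left_mono)
        have "norm (of_real h * w + of_real s * v) \<le> h + s"
          using norm_triangle_ineq[of "of_real h * w" "of_real s * v"] nv nw that h
          by (simp add: norm_mult)
        then show "norm (?y1 - z) \<le> 2 * h" using that by (simp add: add.assoc)
        show "norm (?y2 - z) \<le> h" using that nv by (simp add: norm_mult)
      qed (use e in auto)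
      finally show ?thesis by simp
    qed
    have cont: "continuous_on {0..h} \<phi>"
      using der by (intro continuous_at_imp_continuous_on ballI has_vector_derivative_continuous) auto
    obtain x where x: "x \<in> {0<..<h}" and mv: "norm (\<phi> h - \<phi> 0) \<le> norm ((\<lambda>t. t *\<^sub>R \<phi>' x) (h - 0))"
      using mvt_general[OF h(1) cont, of "\<lambda>s t. t *\<^sub>R \<phi>' s"] der
      unfolding has_vector_derivative_def by auto
    have "norm ((\<lambda>t. t *\<^sub>R \<phi>' x) (h - 0)) \<le> h * (\<epsilon> * h)"
      using bnd[of x] x h by (simp add: mult_left_mono)
    moreover have "\<phi> h - \<phi> 0 = f (z + of_real h * v + of_real h * w) - f (z + of_real h * v) - f (z + of_real h * w) + f z
           - of_real (h^2) * dir_deriv (dir_deriv f v) w z"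
      unfolding \<phi>_def P by (simp add: algebra_simps power2_eq_square)
    ultimately show ?thesis using mv by (simp add: power2_eq_square mult_ac)
  qed
  ultimately show ?thesis by blast
qed

lemma schwarz:
  fixes f :: "complex \<Rightarrow> complex"
  assumes S: "open S" "z \<in> S" and fd: "\<And>p. p \<in> S \<Longrightarrow> f differentiable (at p)"
    and dx: "pdx f differentiable (at z)" and dy: "pdy f differentiable (at z)"
  shows "pdy (pdx f) z = pdx (pdy f) z"
proof (rule ccontr)
  let ?P = "pdy (pdx f) z" and ?Q = "pdx (pdy f) z"
  assume ne: "?P \<noteq> ?Q"
  define \<epsilon> where "\<epsilon> = norm (?P - ?Q) / 4"
  have e: "\<epsilon> > 0" using ne by (simp add: \<epsilon>_def)
  obtain d1 where d1: "d1 > 0" and H1: "\<And>h. 0 < h \<Longrightarrow> h < d1 \<Longrightarrow>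
     norm (f (z + of_real h * 1 + of_real h * \<i>) - f (z + of_real h * 1) - f (z + of_real h * \<i>) + f z
           - of_real (h^2) * ?P) \<le> \<epsilon> * h^2"
    using sq_est[OF S fd, of 1 \<i> \<epsilon>] dx e unfolding pdx_def pdy_def by auto
  obtain d2 where d2: "d2 > 0" and H2: "\<And>h. 0 < h \<Longrightarrow> h < d2 \<Longrightarrow>
     norm (f (z + of_real h * \<i> + of_real h * 1) - f (z + of_real h * \<i>) - f (z + of_real h * 1) + f z
           - of_real (h^2) * ?Q) \<le> \<epsilon> * h^2"
    using sq_est[OF S fd, of \<i> 1 \<epsilon>] dy e unfolding pdx_def pdy_def by auto
  define h where "h = min d1 d2 / 2"
  have h: "0 < h" "h < d1" "h < d2" using d1 d2 by (auto simp: h_def)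
  define E where "E = f (z + of_real h * 1 + of_real h * \<i>) - f (z + of_real h * 1) - f (z + of_real h * \<i>) + f z"
  have E2: "f (z + of_real h * \<i> + of_real h * 1) - f (z + of_real h * \<i>) - f (z + of_real h * 1) + f z = E"
    unfolding E_def by (simp add: add_ac)
  have a: "norm (E - of_real (h^2) * ?P) \<le> \<epsilon> * h^2" using H1[OF h(1,2)] unfolding E_def .
  have b: "norm (E - of_real (h^2) * ?Q) \<le> \<epsilon> * h^2" using H2[OF h(1,3)] unfolding E2 .
  have "norm (of_real (h^2) * (?P - ?Q)) \<le> norm (E - of_real (h^2) * ?Q) + norm (E - of_real (h^2) * ?P)"
    using norm_triangle_ineq4[of "E - of_real (h^2) * ?Q" "E - of_real (h^2) * ?P"]
    by (simp add: algebra_simps)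
  also have "\<dots> \<le> 2 * \<epsilon> * h^2" using a b by simp
  finally have c: "norm (of_real (h^2) * (?P - ?Q)) \<le> 2 * \<epsilon> * h^2" .
  have "norm (of_real (h^2) * (?P - ?Q)) = h^2 * norm (?P - ?Q)"
    by (simp only: norm_mult norm_of_real) simp
  then have "h^2 * norm (?P - ?Q) \<le> h^2 * (norm (?P - ?Q) / 2)"
    using c by (simp add: \<epsilon>_def)
  then have "norm (?P - ?Q) \<le> norm (?P - ?Q) / 2" using h(1) by simp
  then show False using ne by simp
qed



definition eqon :: "complex set \<Rightarrow> (complex \<Rightarrow> complex) \<Rightarrow> (complex \<Rightarrow> complex) \<Rightarrow> bool" where
  "eqon S f g \<longleftrightarrow> (\<forall>w\<in>S. f w = g w)"

lemma pdx_eq: "pdx = (\<lambda>F. dir_deriv F 1)" by (rule ext) (simp add: pdx_def)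
lemma pdy_eq: "pdy = (\<lambda>F. dir_deriv F \<i>)" by (rule ext) (simp add: pdy_def)

lemma pd00[simp]: "pd 0 0 f = f" by (simp add: pd_def)
lemma pd_pdy: "pd i j (pdy f) = pd i (Suc j) f" by (simp add: pd_def funpow_Suc_right del: funpow.simps)
lemma pdx_pd: "pdx (pd i j f) = pd (Suc i) j f" by (simp add: pd_def)
lemma pd_pdy2: "pd i j ((pdy ^^ k) f) = pd i (j + k) f" by (simp add: pd_def funpow_add)

lemma L_dd: "open S \<Longrightarrow> eqon S f g \<Longrightarrow> eqon S (\<lambda>w. dir_deriv f v w) (\<lambda>w. dir_deriv g v w)"
  unfolding eqon_def using dd_local by blast

lemma L_pow: "open S \<Longrightarrow> eqon S f g \<Longrightarrow> eqon S (((\<lambda>F. dir_deriv F v)^^k) f) (((\<lambda>F. dir_deriv F v)^^k) g)"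
proof (induction k)
  case 0 then show ?case by simp
next
  case (Suc k)
  have "eqon S (dir_deriv (((\<lambda>F. dir_deriv F v)^^k) f) v) (dir_deriv (((\<lambda>F. dir_deriv F v)^^k) g) v)"
    using L_dd[OF Suc.prems(1) Suc.IH[OF Suc.prems], of v] by simp
  then show ?case by simp
qed

lemma pdy_pow_eq: "((\<lambda>F. dir_deriv F \<i>)^^k) f = pd 0 k f" by (simp add: pd_def pdy_eq)
lemma pdx_pow_eq: "((\<lambda>F. dir_deriv F 1)^^i) ((pdy^^j) f) = pd i j f" by (simp add: pd_def pdx_eq)

lemma L_pd: "open S \<Longrightarrow> eqon S f g \<Longrightarrow> eqon S (pd i j f) (pd i j g)"
  unfolding pd_def pdx_eq pdy_eq by (intro L_pow)

lemma diff_tr: "open S \<Longrightarrow> w \<in> S \<Longrightarrow> eqon S f g \<Longrightarrow> f differentiable (at w) \<Longrightarrow> g differentiable (at w)"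
  unfolding differentiable_def eqon_def using has_derivative_transform_within_open by blast

lemma smooth_eq:
  assumes S: "open S" and e: "eqon S f g" and sm: "smooth_on f S"
  shows "smooth_on g S"
  unfolding smooth_on_def
proof (intro allI ballI)
  fix i j z assume z: "z \<in> S"
  have "pd i j f differentiable (at z)" using sm z unfolding smooth_on_def by blast
  then show "pd i j g differentiable (at z)" using diff_tr[OF S z L_pd[OF S e]] by blast
qed

lemma smooth_diff: "smooth_on f S \<Longrightarrow> z \<in> S \<Longrightarrow> f differentiable (at z)"
  unfolding smooth_on_def using pd00 by metis

lemma smooth_pd_diff: "smooth_on f S \<Longrightarrow> z \<in> S \<Longrightarrow> pd i j f differentiable (at z)"
  unfolding smooth_on_def by blast

lemma smooth_pdy: "smooth_on f S \<Longrightarrow> smooth_on (pdy f) S"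
  unfolding smooth_on_def pd_pdy by blast

lemma smooth_pdy_pow: "smooth_on f S \<Longrightarrow> smooth_on ((pdy^^j) f) S"
  by (induction j) (auto intro: smooth_pdy)

lemma comm1:
  assumes S: "open S" and sm: "smooth_on f S"
  shows "eqon S ((pdy^^j) (pdx f)) (pdx ((pdy^^j) f))"
proof (induction j)
  case 0 then show ?case by (simp add: eqon_def)
next
  case (Suc j)
  have "eqon S (pdy ((pdy^^j) (pdx f))) (pdy (pdx ((pdy^^j) f)))"
    using L_dd[OF S Suc, of \<i>] by (simp add: pdy_eq)
  moreover have "pdy (pdx ((pdy^^j) f)) z = pdx (pdy ((pdy^^j) f)) z" if z: "z \<in> S" for z
  proof (rule schwarz[OF S z])
    show "\<And>p. p \<in> S \<Longrightarrow> (pdy ^^ j) f differentiable at p"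
      using smooth_diff[OF smooth_pdy_pow[OF sm]] by blast
    show "pdx ((pdy ^^ j) f) differentiable at z"
      using smooth_pd_diff[OF sm z, of 1 j] by (simp add: pd_def)
    show "pdy ((pdy ^^ j) f) differentiable at z"
      using smooth_pd_diff[OF sm z, of 0 "Suc j"] by (simp add: pd_def)
  qed
  ultimately show ?case by (simp add: eqon_def)
qed

lemma L_pdx_pow: "open S \<Longrightarrow> eqon S f g \<Longrightarrow> eqon S ((pdx^^k) f) ((pdx^^k) g)"
  unfolding pdx_eq by (rule L_pow)

lemma pd_pdx:
  assumes S: "open S" and sm: "smooth_on f S"
  shows "eqon S (pd i j (pdx f)) (pd (Suc i) j f)"
proof -
  have "eqon S ((pdx^^i) ((pdy^^j) (pdx f))) ((pdx^^i) (pdx ((pdy^^j) f)))"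
    by (rule L_pdx_pow[OF S comm1[OF S sm]])
  then show ?thesis by (simp add: pd_def funpow_Suc_right del: funpow.simps)
qed

lemma smooth_pdx:
  assumes S: "open S" and sm: "smooth_on f S"
  shows "smooth_on (pdx f) S"
  unfolding smooth_on_def
proof (intro allI ballI)
  fix i j z assume z: "z \<in> S"
  have "pd (Suc i) j f differentiable (at z)" using sm z unfolding smooth_on_def by blast
  moreover have "eqon S (pd (Suc i) j f) (pd i j (pdx f))" using pd_pdx[OF S sm, of i j] by (simp add: eqon_def)
  ultimately show "pd i j (pdx f) differentiable (at z)" using diff_tr[OF S z] by blast
qed

lemma smooth_pd: "open S \<Longrightarrow> smooth_on f S \<Longrightarrow> smooth_on (pd i j f) S"
proof (induction i)
  case 0 then show ?case by (simp add: pd_def smooth_pdy_pow)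
next
  case (Suc i) then show ?case using smooth_pdx[of S "pd i j f"] by (simp add: pdx_pd)
qed

lemma pdy_pd:
  assumes S: "open S" and sm: "smooth_on f S"
  shows "eqon S (pdy (pd i j f)) (pd i (Suc j) f)"
proof (induction i arbitrary: j)
  case 0 then show ?case by (simp add: eqon_def pd_def)
next
  case (Suc i)
  have "pdy (pdx (pd i j f)) z = pdx (pdy (pd i j f)) z" if z: "z \<in> S" for z
  proof (rule schwarz[OF S z])
    show "\<And>p. p \<in> S \<Longrightarrow> pd i j f differentiable at p"
      using smooth_pd_diff[OF sm] by blast
    show "pdx (pd i j f) differentiable at z"
      using smooth_pd_diff[OF sm z] by (simp add: pdx_pd)
    show "pdy (pd i j f) differentiable at z"
      using diff_tr[OF S z _ smooth_pd_diff[OF sm z, of i "Suc j"]] Suc.IH[of j]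
      by (simp add: eqon_def)
  qed
  moreover have "eqon S (pdx (pdy (pd i j f))) (pdx (pd i (Suc j) f))"
    using L_dd[OF S Suc.IH[of j], of 1] by (simp add: pdx_eq)
  ultimately show ?case by (simp add: eqon_def pdx_pd)
qed

lemma lin_dd:
  assumes "f differentiable (at z)" "g differentiable (at z)"
  shows "dir_deriv (\<lambda>w. a * f w + b * g w) v z = a * dir_deriv f v z + b * dir_deriv g v z"
proof -
  have "((\<lambda>s. a * f (z + of_real s * v) + b * g (z + of_real s * v)) has_vector_derivative
          a * dir_deriv f v z + b * dir_deriv g v z) (at 0)"
    using dd_hvd2[of f z 0 v] dd_hvd2[of g z 0 v] assms
    by (auto intro!: has_vector_derivative_add has_vector_derivative_mult_right)
  then show ?thesis unfolding dir_deriv_def by (simp add: vector_derivative_at)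
qed

lemma lin_pow:
  assumes S: "open S"
    and d: "\<And>k z. k < n \<Longrightarrow> z \<in> S \<Longrightarrow> ((\<lambda>F. dir_deriv F v)^^k) f differentiable (at z) \<and>
                              ((\<lambda>F. dir_deriv F v)^^k) g differentiable (at z)"
  shows "eqon S (((\<lambda>F. dir_deriv F v)^^n) (\<lambda>w. a * f w + b * g w))
                (\<lambda>w. a * ((\<lambda>F. dir_deriv F v)^^n) f w + b * ((\<lambda>F. dir_deriv F v)^^n) g w)"
  using d
proof (induction n)
  case 0 then show ?case by (simp add: eqon_def)
next
  case (Suc n)
  let ?D = "\<lambda>F. dir_deriv F v"
  have "eqon S (?D ((?D^^n) (\<lambda>w. a * f w + b * g w))) (?D (\<lambda>w. a * (?D^^n) f w + b * (?D^^n) g w))"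
    using L_dd[OF S Suc.IH] Suc.prems by simp
  moreover have "?D (\<lambda>w. a * (?D^^n) f w + b * (?D^^n) g w) z = a * (?D^^Suc n) f z + b * (?D^^Suc n) g z"
    if "z \<in> S" for z
    using lin_dd Suc.prems[of n z] that by simp
  ultimately show ?case by (simp add: eqon_def)
qed

lemma lin_pd:
  assumes S: "open S" and sf: "smooth_on f S" and sg: "smooth_on g S"
  shows "eqon S (pd i j (\<lambda>w. a * f w + b * g w)) (\<lambda>w. a * pd i j f w + b * pd i j g w)"
proof -
  have 1: "eqon S ((pdy^^j) (\<lambda>w. a * f w + b * g w)) (\<lambda>w. a * (pdy^^j) f w + b * (pdy^^j) g w)"
    unfolding pdy_eq
    by (rule lin_pow[OF S]) (simp add: pdy_pow_eq smooth_pd_diff[OF sf] smooth_pd_diff[OF sg])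
  have 2: "eqon S ((pdx^^i) ((pdy^^j) (\<lambda>w. a * f w + b * g w))) ((pdx^^i) (\<lambda>w. a * (pdy^^j) f w + b * (pdy^^j) g w))"
    by (rule L_pdx_pow[OF S 1])
  have 3: "eqon S ((pdx^^i) (\<lambda>w. a * (pdy^^j) f w + b * (pdy^^j) g w)) (\<lambda>w. a * (pdx^^i) ((pdy^^j) f) w + b * (pdx^^i) ((pdy^^j) g) w)"
    unfolding pdx_eq
    by (rule lin_pow[OF S]) (simp add: pdx_pow_eq smooth_pd_diff[OF sf] smooth_pd_diff[OF sg])
  show ?thesis using 2 3 unfolding pd_def eqon_def by simp
qed

lemma smooth_lin: "open S \<Longrightarrow> smooth_on f S \<Longrightarrow> smooth_on g S \<Longrightarrow> smooth_on (\<lambda>w. a * f w + b * g w) S"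
  unfolding smooth_on_def[of "\<lambda>w. a * f w + b * g w"]
proof (intro allI ballI)
  fix i j z assume S: "open S" and sf: "smooth_on f S" and sg: "smooth_on g S" and z: "z \<in> S"
  have "(\<lambda>w. a * pd i j f w + b * pd i j g w) differentiable (at z)"
    using smooth_pd_diff[OF sf z] smooth_pd_diff[OF sg z]
    by (intro differentiable_add differentiable_mult differentiable_const) auto
  then show "pd i j (\<lambda>w. a * f w + b * g w) differentiable at z"
    using diff_tr[OF S z] lin_pd[OF S sf sg] by (metis eqon_def)
qed

lemma smooth_dd: "open S \<Longrightarrow> smooth_on f S \<Longrightarrow> smooth_on (dir_deriv f v) S"
  by (rule smooth_eq[of S "\<lambda>w. of_real (Re v) * pdx f w + of_real (Im v) * pdy f w"])
     (auto simp: eqon_def dd_lin smooth_diff intro!: smooth_lin smooth_pdx smooth_pdy)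

lemma pd_dd:
  assumes S: "open S" and sm: "smooth_on f S"
  shows "eqon S (pd i j (dir_deriv f v)) (\<lambda>w. of_real (Re v) * pd (Suc i) j f w + of_real (Im v) * pd i (Suc j) f w)"
proof -
  have "eqon S (pd i j (dir_deriv f v)) (pd i j (\<lambda>w. of_real (Re v) * pdx f w + of_real (Im v) * pdy f w))"
    by (rule L_pd[OF S]) (auto simp: eqon_def dd_lin smooth_diff[OF sm])
  moreover have "eqon S (pd i j (\<lambda>w. of_real (Re v) * pdx f w + of_real (Im v) * pdy f w))
     (\<lambda>w. of_real (Re v) * pd i j (pdx f) w + of_real (Im v) * pd i j (pdy f) w)"
    by (rule lin_pd[OF S smooth_pdx[OF S sm] smooth_pdy[OF sm]])
  ultimately show ?thesis using pd_pdx[OF S sm, of i j] by (simp add: eqon_def pd_pdy)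
qed



definition Pat :: "(complex \<Rightarrow> complex) \<Rightarrow> complex \<Rightarrow> nat \<Rightarrow> complex \<Rightarrow> complex \<Rightarrow> bool" where
  "Pat f x0 k A B \<longleftrightarrow> (\<forall>i j. i + j < k \<longrightarrow> pd i j f x0 = 0) \<and>
      (\<forall>j\<le>k. pd (k - j) j f x0 = A * \<i>^j + B * (-\<i>)^j)"

lemma alg1: "of_real a * (A*p + B*q) + of_real b * (A*(p*\<i>) + B*(q*(-\<i>))) =
   A*(of_real a + \<i> * of_real b)*p + B*(of_real a - \<i> * of_real b)*(q::complex)"
  by (simp add: algebra_simps)

lemma Pat_step:
  assumes S: "open S" and x0: "x0 \<in> S" and sm: "smooth_on f S" and P: "Pat f x0 (Suc k) A B"
  shows "Pat (dir_deriv f v) x0 k (A * v) (B * cnj v)"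
proof -
  have E: "pd i j (dir_deriv f v) x0 = of_real (Re v) * pd (Suc i) j f x0 + of_real (Im v) * pd i (Suc j) f x0" for i j
    using pd_dd[OF S sm, of i j v] x0 by (simp add: eqon_def)
  have P1: "\<And>i j. i + j < Suc k \<Longrightarrow> pd i j f x0 = 0" and P2: "\<And>j. j \<le> Suc k \<Longrightarrow> pd (Suc k - j) j f x0 = A * \<i>^j + B * (-\<i>)^j"
    using P unfolding Pat_def by auto
  have "pd i j (dir_deriv f v) x0 = 0" if "i + j < k" for i j
    using that by (simp add: E P1)
  moreover have "pd (k - j) j (dir_deriv f v) x0 = A * v * \<i>^j + B * cnj v * (-\<i>)^j" if j: "j \<le> k" for j
  proof -
    have a: "pd (Suc (k - j)) j f x0 = A * \<i>^j + B * (-\<i>)^j" using P2[of j] j by (simp add: Suc_diff_le)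
    have b: "pd (k - j) (Suc j) f x0 = A * (\<i>^j * \<i>) + B * ((-\<i>)^j * (-\<i>))" using P2[of "Suc j"] j by simp
    have v: "v = of_real (Re v) + \<i> * of_real (Im v)" "cnj v = of_real (Re v) - \<i> * of_real (Im v)"
      by (simp_all add: complex_eq_iff)
    show ?thesis unfolding E a b by (subst (1 2) v) (rule alg1)
  qed
  ultimately show ?thesis unfolding Pat_def by auto
qed

lemma smooth_dd_pow: "open S \<Longrightarrow> smooth_on f S \<Longrightarrow> smooth_on (((\<lambda>F. dir_deriv F v)^^m) f) S"
  by (induction m) (auto intro: smooth_dd)

lemma Pat_iter:
  assumes S: "open S" and x0: "x0 \<in> S" and sm: "smooth_on f S"
  shows "Pat f x0 (m + k) A B \<Longrightarrow> Pat (((\<lambda>F. dir_deriv F v)^^m) f) x0 k (A * v^m) (B * cnj v^m)"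
proof (induction m arbitrary: k)
  case 0 then show ?case by simp
next
  case (Suc m)
  have "Pat (((\<lambda>F. dir_deriv F v)^^m) f) x0 (Suc k) (A * v^m) (B * cnj v^m)"
    using Suc.IH[of "Suc k"] Suc.prems by simp
  from Pat_step[OF S x0 smooth_dd_pow[OF S sm] this, of v]
  show ?case by (simp add: mult_ac)
qed

lemma Pat0: "Pat f x0 0 A B \<Longrightarrow> f x0 = A + B"
  unfolding Pat_def by auto

lemma line_hasder: "((\<lambda>s::real. p + of_real s * v) has_derivative (\<lambda>d. of_real d * v)) (at t)"
proof -
  have bl: "bounded_linear (\<lambda>s::real. of_real s * v)"
    using bounded_linear_scaleR_left[of v] by (simp add: scaleR_conv_of_real)
  show ?thesis
    using has_derivative_add[OF has_derivative_const[of p] bounded_linear_imp_has_derivative[OF bl]] by simp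
qed

lemma bd_zero:
  assumes S: "open S" and sm: "smooth_on g S" and h: "h > 0"
    and seg: "\<And>t. t \<in> {0..h} \<Longrightarrow> x0 + of_real t * e \<in> S"
    and z: "\<And>t. t \<in> {0..h} \<Longrightarrow> g (x0 + of_real t * e) = 0"
  shows "((\<lambda>F. dir_deriv F e)^^k) g x0 = 0"
proof -
  let ?D = "\<lambda>F. dir_deriv F e"
  have int: "\<forall>t\<in>{0<..<h}. (?D^^k) g (x0 + of_real t * e) = 0"
  proof (induction k)
    case 0 show ?case
    proof
      fix t :: real assume "t \<in> {0<..<h}"
      then have "t \<in> {0..h}" by simp
      from z[OF this] show "((\<lambda>F. dir_deriv F e)^^0) g (x0 + of_real t * e) = 0" by (simp only: funpow_0)
    qed
  next
    case (Suc k)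
    show ?case
    proof
      fix t assume t: "t \<in> {0<..<h}"
      then have "t \<in> {0..h}" by simp
      then have tS: "x0 + of_real t * e \<in> S" by (rule seg)
      have "(?D^^k) g differentiable (at (x0 + of_real t * e))"
        by (rule smooth_diff[OF smooth_dd_pow[OF S sm] tS])
      from dd_hvd2[OF this]
      have d1: "((\<lambda>s. (?D^^k) g (x0 + of_real s * e)) has_vector_derivative (?D^^Suc k) g (x0 + of_real t * e)) (at t)"
        by (simp only: funpow.simps o_apply)
      have d0: "((\<lambda>s. 0) has_vector_derivative 0) (at t)" by (rule has_vector_derivative_const)
      have d2: "((\<lambda>s. (?D^^k) g (x0 + of_real s * e)) has_vector_derivative 0) (at t)"
      proof (rule has_vector_derivative_transform_within_open[OF d0 open_greaterThanLessThan t])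
        fix y assume "y \<in> {0<..<h}"
        from bspec[OF Suc.IH this] show "0 = (?D^^k) g (x0 + of_real y * e)" by (rule sym)
      qed
      show "(?D^^Suc k) g (x0 + of_real t * e) = 0"
        using vector_derivative_unique_at[OF d1 d2] .
    qed
  qed
  let ?G = "\<lambda>s. (?D^^k) g (x0 + of_real s * e)"
  have x0S: "x0 \<in> S" using seg[of 0] h by simp
  have x00: "x0 + of_real 0 * e = x0" by simp
  have "(?D^^k) g differentiable (at (x0 + of_real 0 * e))"
    unfolding x00 by (rule smooth_diff[OF smooth_dd_pow[OF S sm] x0S])
  then have c2: "isCont ((?D^^k) g) (x0 + of_real 0 * e)"
    by (rule differentiable_imp_continuous_within)
  have c1: "isCont (\<lambda>s::real. x0 + of_real s * e) 0"
    by (rule has_derivative_continuous[OF line_hasder])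
  have "isCont ((?D^^k) g \<circ> (\<lambda>s::real. x0 + of_real s * e)) 0"
    by (rule continuous_at_compose[OF c1 c2])
  then have "isCont ?G 0" by (simp add: o_def)
  then have "(?G \<longlongrightarrow> ?G 0) (at 0)" by (simp only: isCont_def)
  then have l1: "(?G \<longlongrightarrow> ?G 0) (at_right 0)"
    using filterlim_at_split by blast
  have "eventually (\<lambda>s. ?G s = 0) (at_right 0)"
  proof (rule eventually_at_rightI[OF _ h])
    fix s :: real assume "s \<in> {0<..<h}"
    from bspec[OF int this] show "?G s = 0" .
  qed
  then have l2: "(?G \<longlongrightarrow> 0) (at_right 0)"
    by (rule tendsto_eventually)
  have "?G 0 = 0" by (rule tendsto_unique[OF trivial_limit_at_right_real l1 l2])
  then show ?thesis by (simp only: x00)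
qed



lemma harm:
  assumes S: "open S" and sm: "smooth_on u S" and pde: "\<forall>z\<in>S. - laplacian u z = of_real lam * u z"
    and x0: "x0 \<in> S"
  shows "pd (i+2) j u x0 + pd i (j+2) u x0 = - of_real lam * pd i j u x0"
proof -
  let ?H = "\<lambda>w. 1 * pd 2 0 u w + 1 * pd 0 2 u w"
  let ?R = "\<lambda>w. (- of_real lam) * u w + 0 * u w"
  have lap: "laplacian u w = pd 2 0 u w + pd 0 2 u w" for w
    by (simp add: laplacian_def pd_def numeral_2_eq_2)
  have e1: "eqon S ?H ?R" using pde lap unfolding eqon_def by (metis add.inverse_inverse minus_mult_left mult_1 mult_zero_left add_0_right)
  have e2: "eqon S (pd i j ?H) (pd i j ?R)" by (rule L_pd[OF S e1])
  have e3: "eqon S (pd i j ?H) (\<lambda>w. 1 * pd i j (pd 2 0 u) w + 1 * pd i j (pd 0 2 u) w)"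
    by (rule lin_pd[OF S smooth_pd[OF S sm] smooth_pd[OF S sm]])
  have e4: "eqon S (pd i j ?R) (\<lambda>w. (- of_real lam) * pd i j u w + 0 * pd i j u w)"
    by (rule lin_pd[OF S sm sm])
  have e5: "pd 2 0 u = pdx (pdx u)" by (simp add: pd_def numeral_2_eq_2)
  have e6: "eqon S (pd i j (pdx (pdx u))) (pd (Suc i) j (pdx u))" by (rule pd_pdx[OF S smooth_pdx[OF S sm]])
  have e7: "eqon S (pd (Suc i) j (pdx u)) (pd (Suc (Suc i)) j u)" by (rule pd_pdx[OF S sm])
  have e8: "pd i j (pd 0 2 u) = pd i (j+2) u"
  proof -
    have "pd 0 2 u = (pdy^^2) u" by (simp add: pd_def)
    then show ?thesis by (simp add: pd_pdy2)
  qed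
  show ?thesis using e2 e3 e4 e6 e7 x0 unfolding eqon_def e5 e8
    by (simp add: numeral_2_eq_2)
qed

lemma ii2: "\<i>^(Suc (Suc k)) = - (\<i>^k)" "(-\<i>)^(Suc (Suc k)) = - ((-\<i>)^k)"
  by (simp_all add: power_Suc)

lemma lin_aux: "x = - y \<Longrightarrow> y = P * a + Q * b \<Longrightarrow> x = P * (-a) + Q * (-(b::complex))"
  by simp

lemma coef:
  fixes c :: "nat \<Rightarrow> nat \<Rightarrow> complex"
  assumes harmc: "\<And>i j. c (i+2) j + c i (j+2) = - L * c i j"
    and low: "\<And>i j. i + j < N \<Longrightarrow> c i j = 0"
  shows "j \<le> N \<Longrightarrow> c (N - j) j = (c N 0 - \<i> * c (N-1) 1)/2 * \<i>^j + (c N 0 + \<i> * c (N-1) 1)/2 * (-\<i>)^j"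
proof (induction j rule: less_induct)
  case (less j)
  show ?case
  proof (cases j)
    case 0 then show ?thesis by (simp add: field_simps)
  next
    case (Suc j1)
    show ?thesis
    proof (cases j1)
      case 0 then show ?thesis using Suc by (simp add: field_simps)
    next
      case (Suc k)
      have j: "j = Suc (Suc k)" using Suc \<open>j = Suc j1\<close> by simp
      have IH: "c (N - k) k = (c N 0 - \<i> * c (N-1) 1)/2 * \<i>^k + (c N 0 + \<i> * c (N-1) 1)/2 * (-\<i>)^k"
        using less.IH[of k] less.prems j by simp
      have h: "c (N - (k+2) + 2) k + c (N - (k+2)) (k+2) = - L * c (N - (k+2)) k" by (rule harmc)
      have z: "c (N - (k+2)) k = 0" using low less.prems j by simp
      have nn: "N - (k+2) + 2 = N - k" using less.prems j by simp
      have "c (N - j) j = - c (N - k) k" using h z nn j by (simp add: eq_neg_iff_add_eq_0 add.commute)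
      from lin_aux[OF this IH] show ?thesis unfolding j ii2 .
    qed
  qed
qed

lemma fin_alg:
  fixes A B e1 w :: complex
  assumes a1: "A * e1^N = B * cnj e1^N" and a2: "A * (e1*w)^N = B * cnj (e1*w)^N"
    and e1: "e1 \<noteq> 0" and w: "w^N \<noteq> cnj w^N"
  shows "A = 0 \<and> B = 0"
proof -
  have "A * e1^N * w^N = B * cnj e1^N * cnj w^N" using a2 by (simp add: power_mult_distrib mult_ac)
  also have "\<dots> = A * e1^N * cnj w^N" using a1 by simp
  finally have "A * e1^N * (w^N - cnj w^N) = 0" by (simp add: algebra_simps)
  then have A: "A = 0" using e1 w by simp
  then have "B * cnj e1^N = 0" using a1 by simp
  then have "B = 0" using e1 by simp
  with A show ?thesis by simp
qed

lemma cis_pow_ne: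
  assumes "sin (real N * t) \<noteq> 0"
  shows "cis t ^ N \<noteq> cnj (cis t) ^ N"
proof
  assume "cis t ^ N = cnj (cis t) ^ N"
  then have "cis (real N * t) = cis (- (real N * t))" by (simp add: Complex.DeMoivre cis_cnj)
  then have "Im (cis (real N * t)) = Im (cis (- (real N * t)))" by simp
  then have "sin (real N * t) = - sin (real N * t)" by simp
  then show False using assms by simp
qed

lemma seg_pts:
  assumes h: "h > 0" and t: "t \<in> {0..h}"
  shows "x0 + of_real t * e \<in> closed_segment x0 (x0 + of_real h * e)"
  unfolding in_segment(1)
proof (intro exI conjI)
  show "0 \<le> t / h" "t / h \<le> 1" using h t by auto
  show "x0 + of_real t * e = (1 - t / h) *\<^sub>R x0 + (t / h) *\<^sub>R (x0 + of_real h * e)"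
  proof -
    have a: "(1 - t/h) *\<^sub>R x0 + (t/h) *\<^sub>R x0 = x0" by (simp add: scaleR_left_distrib[symmetric])
    have "of_real (t/h) * (of_real h * e) = of_real (t/h * h) * e" by (simp only: of_real_mult mult.assoc)
    then have b: "(t/h) *\<^sub>R (of_real h * e) = of_real t * e" using h by (simp add: scaleR_conv_of_real)
    have "(1 - t / h) *\<^sub>R x0 + (t / h) *\<^sub>R (x0 + of_real h * e) =
          ((1 - t/h) *\<^sub>R x0 + (t/h) *\<^sub>R x0) + (t/h) *\<^sub>R (of_real h * e)"
      by (simp only: scaleR_right_distrib add.assoc)
    then show ?thesis unfolding a b by simp
  qed
qed

lemma bdry:
  assumes S: "open S" and sm: "smooth_on u S" and x0: "x0 \<in> S" and P: "Pat u x0 N A B"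
    and N: "N \<ge> 1" and h: "h > 0" and seg: "closed_segment x0 (x0 + of_real h * e) \<subseteq> S"
    and gsl: "gen_singular_line_const u x0 e h C"
  shows "A * e^N = B * cnj e ^ N"
proof -
  let ?g = "\<lambda>w. 1 * dir_deriv u (\<i> * e) w + C * u w"
  let ?D = "\<lambda>F. dir_deriv F e"
  obtain M where M: "N = Suc M" using N by (cases N) auto
  have smg: "smooth_on ?g S" by (rule smooth_lin[OF S smooth_dd[OF S sm] sm])
  have z: "(?D^^M) ?g x0 = 0"
  proof (rule bd_zero[OF S smg h])
    fix t :: real assume t: "t \<in> {0..h}"
    show "x0 + of_real t * e \<in> S" using seg seg_pts[OF h t] by blast
    show "?g (x0 + of_real t * e) = 0" using gsl t unfolding gen_singular_line_const_def by simp
  qed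
  have Pd: "Pat (dir_deriv u (\<i> * e)) x0 M (A * (\<i> * e)) (B * cnj (\<i> * e))"
  proof -
    have "Pat u x0 (Suc M) A B" using P M by simp
    from Pat_step[OF S x0 sm this] show ?thesis .
  qed
  have lin: "pd i j ?g x0 = 1 * pd i j (dir_deriv u (\<i> * e)) x0 + C * pd i j u x0" for i j
    using lin_pd[OF S smooth_dd[OF S sm, of "\<i> * e"] sm, where a=1 and b=C and i=i and j=j] x0 unfolding eqon_def by blast
  have low: "pd i j u x0 = 0" if "i + j < N" for i j using P that unfolding Pat_def by blast
  have Pg: "Pat ?g x0 M (A * (\<i> * e)) (B * cnj (\<i> * e))"
    unfolding Pat_def
  proof (intro conjI allI impI)
    fix i j assume "i + j < M"
    then show "pd i j ?g x0 = 0" using Pd low[of i j] M unfolding lin Pat_def by simp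
  next
    fix j assume j: "j \<le> M"
    then have "pd (M - j) j u x0 = 0" using low[of "M - j" j] M by simp
    then show "pd (M - j) j ?g x0 = A * (\<i> * e) * \<i> ^ j + B * cnj (\<i> * e) * (- \<i>) ^ j"
      using Pd j unfolding lin Pat_def by simp
  qed
  have "Pat ((?D^^M) ?g) x0 0 (A * (\<i> * e) * e^M) (B * cnj (\<i> * e) * cnj e ^ M)"
  proof -
    have Pg0: "Pat ?g x0 (M + 0) (A * (\<i> * e)) (B * cnj (\<i> * e))" using Pg by (simp only: add_0_right)
    show ?thesis by (rule Pat_iter[OF S x0 smg Pg0, where v=e])
  qed
  from Pat0[OF this] z
  have "A * (\<i> * e) * e^M + B * cnj (\<i> * e) * cnj e ^ M = 0" by simp
  then have "\<i> * (A * e^N - B * cnj e ^ N) = 0" unfolding M by (simp add: algebra_simps)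
  then show ?thesis by simp
qed

theorem theorem3p1:
  fixes \<Omega> :: "complex set" and u :: "complex \<Rightarrow> complex" and lam :: real
    and x0 em ep C1 C2 :: complex and h \<alpha> :: real and n :: nat
  assumes "open \<Omega>" and "lam > 0"
    and "smooth_on u \<Omega>"
    and "(\<lambda>z. (cmod (u z))\<^sup>2) integrable_on \<Omega>"
    and "\<forall>z\<in>\<Omega>. - laplacian u z = of_real lam * u z"
    and "x0 \<in> \<Omega>" and "h > 0" and "0 < \<alpha>" and "\<alpha> < 1"
    and "cmod em = 1" and "cmod ep = 1"
    and "ep = em * cis (\<alpha> * pi) \<or> em = ep * cis (\<alpha> * pi)"
    and "closed_segment x0 (x0 + of_real h * em) \<subseteq> \<Omega>"
    and "closed_segment x0 (x0 + of_real h * ep) \<subseteq> \<Omega>"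
    and "gen_singular_line_const u x0 em h C1"
    and "gen_singular_line_const u x0 ep h C2"
    and "n \<ge> 3"
    and "u x0 = 0"
    and "\<forall>p q::nat. 1 \<le> q \<and> q < p \<and> p \<le> n - 1 \<longrightarrow> \<alpha> \<noteq> real q / real p"
  shows "vanishes_up_to_order u n x0"
proof (rule ccontr)
  note S = assms(1) and sm = assms(3) and pde = assms(5) and x0 = assms(6) and h = assms(7)
  assume "\<not> vanishes_up_to_order u n x0"
  then obtain i0 j0 where ij0: "i0 + j0 < n" "pd i0 j0 u x0 \<noteq> 0"
    unfolding vanishes_up_to_order_def by blast
  define N where "N = (LEAST k. \<exists>i j. i + j = k \<and> pd i j u x0 \<noteq> 0)"
  have exN: "\<exists>i j. i + j = N \<and> pd i j u x0 \<noteq> 0"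
    unfolding N_def by (rule LeastI[of _ "i0 + j0"]) (use ij0 in blast)
  have Nle: "N \<le> i0 + j0" unfolding N_def by (rule Least_le) (use ij0 in blast)
  have low: "pd i j u x0 = 0" if "i + j < N" for i j
    using not_less_Least[of "i + j" "\<lambda>k. \<exists>i j. i + j = k \<and> pd i j u x0 \<noteq> 0"] that
    unfolding N_def by blast
  have N1: "N \<ge> 1"
  proof (rule ccontr)
    assume "\<not> N \<ge> 1"
    then have "N = 0" by simp
    then show False using exN assms(18) by auto
  qed
  have Nn: "N < n" using Nle ij0 by simp
  let ?c = "\<lambda>i j. pd i j u x0"
  define A where "A = (?c N 0 - \<i> * ?c (N-1) 1)/2"
  define B where "B = (?c N 0 + \<i> * ?c (N-1) 1)/2"
  have cf: "?c (N - j) j = A * \<i>^j + B * (-\<i>)^j" if "j \<le> N" for j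
    unfolding A_def B_def
    by (rule coef[of ?c "of_real lam" N, OF harm[OF S sm pde x0] low that])
  have P: "Pat u x0 N A B" unfolding Pat_def using low cf by blast
  have bm: "A * em^N = B * cnj em ^ N" by (rule bdry[OF S sm x0 P N1 h assms(13) assms(15)])
  have bp: "A * ep^N = B * cnj ep ^ N" by (rule bdry[OF S sm x0 P N1 h assms(14) assms(16)])
  let ?w = "cis (\<alpha> * pi)"
  have sinne: "sin (real N * (\<alpha> * pi)) \<noteq> 0"
  proof
    assume "sin (real N * (\<alpha> * pi)) = 0"
    then obtain q :: int where q: "real N * (\<alpha> * pi) = of_int q * pi"
      unfolding sin_zero_iff_int2 by blast
    then have q2: "real N * \<alpha> = of_int q" by (simp add: mult.assoc[symmetric])
    have "of_int q > (0::real)" using q2 N1 assms(8) by (metis of_nat_0_less_iff less_le_trans zero_less_one mult_pos_pos of_nat_1 of_nat_le_iff)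
    then have q1: "q \<ge> 1" by simp
    have "of_int q < real N" using q2 assms(9) N1 by (metis mult.right_neutral mult_strict_left_mono of_nat_0_less_iff less_le_trans zero_less_one)
    then have qN: "nat q < N" using q1 by linarith
    have qq: "real (nat q) = of_int q" using q1 by simp
    have "\<alpha> = real (nat q) / real N" using q2 qq N1 by (simp add: field_simps)
    moreover have "1 \<le> nat q" using q1 by simp
    moreover have "N \<le> n - 1" using Nn by simp
    ultimately show False using assms(19) qN by blast
  qed
  have wne: "?w ^ N \<noteq> cnj ?w ^ N" by (rule cis_pow_ne[OF sinne])
  have AB: "A = 0 \<and> B = 0"
    using assms(12)
  proof
    assume "ep = em * ?w"
    then show ?thesis using fin_alg[OF bm _ _ wne] bp assms(10) by force
  next
    assume "em = ep * ?w"
    then show ?thesis using fin_alg[OF bp _ _ wne] bm assms(11) by force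
  qed
  obtain i j where ij: "i + j = N" "pd i j u x0 \<noteq> 0" using exN by blast
  then have "i = N - j" "j \<le> N" by auto
  then show False using cf[of j] AB ij(2) by simp
qed

end
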